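(* Let $A$ be a finite set and $F:A^{\mathbb{Z}}\to A^{\mathbb{Z}}$ an ergodic cellular automaton. Then for every $\epsilon>0$ there is a finite collection of cylinders $\{U_i\}_{i\in I}$ such that $\mu\left(\bigcup_{i\in I}U_i\right)<\epsilon$ and $\{c\in A^{\mathbb{Z}}\mid F^t(c)\in\bigcup_{i\in I}U_i\text{ for some }t\in\mathbb{N}\}=A^{\mathbb{Z}}$.
   Context: A cylinder is a set $\mathrm{cyl}(w,i)=\{c\in A^{\mathbb{Z}}\mid c(i)c(i+1)\cdots c(i+|w|-1)=w\}$ for a nonempty word $w$ over $A$ and $i\in\mathbb{Z}$. $A^{\mathbb{Z}}$ has the product topology (generated by cylinders), and $\mu$ is the uniform Bernoulli probability measure on the Borel sets with $\mu(\mathrm{cyl}(w,i))=|A|^{-|w|}$. A cellular automaton is a map $F(c)(i)=f(c(i+n_1),\dots,c(i+n_m))$ for a fixed vector $(n_1,\dots,n_m)\in\mathbb{Z}^m$ and local rule $f:A^m\to A$. $F$ is measure preserving if $\mu(F^{-1}(S))=\mu(S)$ for all Borel $S$, and ergodic if it is measure preserving and every Borel $S$ with $F^{-1}(S)=S$ has $\mu(S)\in\{0,1\}$. $\mathbb{N}=\{0,1,2,\dots\}$. *)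

theory Defs
  imports "HOL-Probability.Probability"
begin

type_synonym 'a config = "int \<Rightarrow> 'a"

definition cyl :: "'a list \<Rightarrow> int \<Rightarrow> 'a config set" where
  "cyl w i = {c. \<forall>j<length w. c (i + int j) = w ! j}"

definition is_cylinder :: "'a config set \<Rightarrow> bool" where
  "is_cylinder U \<longleftrightarrow> (\<exists>w i. w \<noteq> [] \<and> U = cyl w i)"

definition bernoulli_mu :: "('a::finite) config measure" where
  "bernoulli_mu = PiM UNIV (\<lambda>_::int. measure_pmf (pmf_of_set (UNIV :: 'a set)))"

definition cellular_automaton :: "('a config \<Rightarrow> 'a config) \<Rightarrow> bool" where
  "cellular_automaton F \<longleftrightarrow>
     (\<exists>(ns :: int list) (f :: 'a list \<Rightarrow> 'a).
        \<forall>c i. F c i = f (map (\<lambda>n. c (i + n)) ns))"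

definition measure_preserving :: "(('a::finite) config \<Rightarrow> 'a config) \<Rightarrow> bool" where
  "measure_preserving F \<longleftrightarrow> F \<in> measurable bernoulli_mu bernoulli_mu \<and>
     (\<forall>S \<in> sets bernoulli_mu. emeasure bernoulli_mu (F -` S \<inter> space bernoulli_mu) = emeasure bernoulli_mu S)"

definition ergodic :: "(('a::finite) config \<Rightarrow> 'a config) \<Rightarrow> bool" where
  "ergodic F \<longleftrightarrow> measure_preserving F \<and>
     (\<forall>S \<in> sets bernoulli_mu. F -` S = S \<longrightarrow>
        measure bernoulli_mu S = 0 \<or> measure bernoulli_mu S = 1)"

end

theory Submission
  imports Defs
begin

lemma space_bm[simp]: "space (bernoulli_mu :: ('a::finite) config measure) = UNIV"
  by (simp add: bernoulli_mu_def space_PiM)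

lemma sets_pmf_univ[simp]: "sets (measure_pmf p) = UNIV" by simp

lemma prob_bm: "prob_space (bernoulli_mu :: ('a::finite) config measure)"
  unfolding bernoulli_mu_def by (rule prob_space_PiM) (simp add: prob_space_measure_pmf)

lemma proj_sets: "{c. c k = a} \<in> sets (bernoulli_mu :: ('a::finite) config measure)"
proof -
  have "(\<lambda>c. c k) -` {a} \<inter> space (bernoulli_mu :: 'a config measure) \<in> sets bernoulli_mu"
    unfolding bernoulli_mu_def by (rule measurable_sets[OF measurable_component_singleton]) auto
  moreover have "(\<lambda>c. c k) -` {a} \<inter> space (bernoulli_mu :: 'a config measure) = {c. c k = a}" by auto
  ultimately show ?thesis by simp
qed

lemma cyl_sets: "cyl w i \<in> sets (bernoulli_mu :: ('a::finite) config measure)"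
proof -
  have "cyl w i = {c \<in> space (bernoulli_mu :: 'a config measure). \<forall>j\<in>{..<length w}. c (i + int j) \<in> {w ! j}}"
    by (auto simp: cyl_def)
  also have "\<dots> \<in> sets bernoulli_mu"
    by (intro sets.sets_Collect_finite_All) (auto simp: proj_sets)
  finally show ?thesis .
qed

lemma cyl_rep_measure:
  "measure (bernoulli_mu :: ('a::finite) config measure) (cyl (replicate n a) 0) = (1 / real CARD('a)) ^ n"
proof -
  interpret product_prob_space "\<lambda>_::int. measure_pmf (pmf_of_set (UNIV :: 'a set))" UNIV
    by unfold_locales
  have "cyl (replicate n a) 0 = {x \<in> space bernoulli_mu. \<forall>i\<in>int ` {..<n}. x i \<in> {a}}"
    by (auto simp: cyl_def)
  then have "emeasure bernoulli_mu (cyl (replicate n a) 0) = (\<Prod>i\<in>int ` {..<n}. emeasure (measure_pmf (pmf_of_set (UNIV :: 'a set))) {a})"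
    using emeasure_PiM_Collect[of "int ` {..<n}" "\<lambda>_. {a}"] by (simp add: bernoulli_mu_def)
  also have "\<dots> = ennreal ((1 / real CARD('a)) ^ n)"
    by (simp add: emeasure_pmf_single card_image ennreal_power)
  finally have "emeasure bernoulli_mu (cyl (replicate n a) 0) = ennreal ((1 / real CARD('a)) ^ n)" .
  then show ?thesis using prob_bm
    by (simp add: finite_measure.emeasure_eq_measure[OF prob_space.finite_measure[OF prob_bm]] measure_nonneg)
qed


definition loc :: "('a config \<Rightarrow> 'a config) \<Rightarrow> bool" where
  "loc G \<longleftrightarrow> (\<forall>m::nat. \<exists>R::nat. \<forall>c d. (\<forall>i. \<bar>i\<bar> \<le> int R \<longrightarrow> c i = d i) \<longrightarrow>
      (\<forall>i. \<bar>i\<bar> \<le> int m \<longrightarrow> G c i = G d i))"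

lemma loc_id: "loc (\<lambda>c. c)" unfolding loc_def by blast

lemma loc_comp: assumes "loc G" "loc H" shows "loc (\<lambda>c. G (H c))"
  unfolding loc_def
proof
  fix m
  obtain R1 where R1: "\<And>c d. (\<forall>i. \<bar>i\<bar> \<le> int R1 \<longrightarrow> c i = d i) \<Longrightarrow> (\<forall>i. \<bar>i\<bar> \<le> int m \<longrightarrow> G c i = G d i)"
    using assms(1) unfolding loc_def by blast
  obtain R2 where R2: "\<And>c d. (\<forall>i. \<bar>i\<bar> \<le> int R2 \<longrightarrow> c i = d i) \<Longrightarrow> (\<forall>i. \<bar>i\<bar> \<le> int R1 \<longrightarrow> H c i = H d i)"
    using assms(2) unfolding loc_def by blast
  show "\<exists>R. \<forall>c d. (\<forall>i. \<bar>i\<bar> \<le> int R \<longrightarrow> c i = d i) \<longrightarrow> (\<forall>i. \<bar>i\<bar> \<le> int m \<longrightarrow> G (H c) i = G (H d) i)"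
    using R1 R2 by blast
qed

lemma loc_ca: assumes "cellular_automaton F" shows "loc F"
proof -
  obtain ns f where F: "\<And>c i. F c i = f (map (\<lambda>n. c (i + n)) ns)"
    using assms unfolding cellular_automaton_def by blast
  show ?thesis unfolding loc_def
  proof
    fix m
    define R where "R = m + sum_list (map (\<lambda>n. nat \<bar>n\<bar>) ns)"
    have b: "\<And>n. n \<in> set ns \<Longrightarrow> \<bar>n\<bar> \<le> int (sum_list (map (\<lambda>n. nat \<bar>n\<bar>) ns))"
    proof -
      fix n assume "n \<in> set ns"
      then have "nat \<bar>n\<bar> \<le> sum_list (map (\<lambda>n. nat \<bar>n\<bar>) ns)"
        by (intro member_le_sum_list) auto
      then show "\<bar>n\<bar> \<le> int (sum_list (map (\<lambda>n. nat \<bar>n\<bar>) ns))" by linarith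
    qed
    show "\<exists>R. \<forall>c d. (\<forall>i. \<bar>i\<bar> \<le> int R \<longrightarrow> c i = d i) \<longrightarrow> (\<forall>i. \<bar>i\<bar> \<le> int m \<longrightarrow> F c i = F d i)"
    proof (intro exI[of _ R] allI impI)
      fix c d :: "'a config" and i :: int
      assume h: "\<forall>i. \<bar>i\<bar> \<le> int R \<longrightarrow> c i = d i" and i: "\<bar>i\<bar> \<le> int m"
      have "map (\<lambda>n. c (i + n)) ns = map (\<lambda>n. d (i + n)) ns"
      proof (rule map_cong[OF refl])
        fix n assume "n \<in> set ns"
        from b[OF this] i have "\<bar>i + n\<bar> \<le> int R" unfolding R_def by linarith
        then show "c (i + n) = d (i + n)" using h by blast
      qed
      then show "F c i = F d i" by (simp only: F)
    qed
  qed
qed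

lemma loc_funpow: assumes "cellular_automaton F" shows "loc (F ^^ t)"
proof (induction t)
  case 0 then show ?case using loc_id by (simp add: id_def)
next
  case (Suc t)
  have "loc (\<lambda>c. F ((F ^^ t) c))" by (rule loc_comp[OF loc_ca[OF assms] Suc])
  then show ?case by (simp add: o_def)
qed


lemma funpow_meas:
  assumes "measure_preserving (F :: ('a::finite) config \<Rightarrow> 'a config)"
  shows "(F ^^ t) \<in> measurable bernoulli_mu bernoulli_mu"
proof (induction t)
  case 0 then show ?case by simp
next
  case (Suc t)
  have "F \<in> measurable bernoulli_mu bernoulli_mu" using assms by (simp add: measure_preserving_def)
  then show ?case using Suc by (simp add: measurable_comp)
qed

lemma funpow_pre_sets:
  assumes "measure_preserving (F :: ('a::finite) config \<Rightarrow> 'a config)" "S \<in> sets bernoulli_mu"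
  shows "(F ^^ t) -` S \<in> sets bernoulli_mu"
  using measurable_sets[OF funpow_meas[OF assms(1)] assms(2)] by simp

lemma funpow_pre_emeasure:
  assumes "measure_preserving (F :: ('a::finite) config \<Rightarrow> 'a config)" "S \<in> sets bernoulli_mu"
  shows "emeasure bernoulli_mu ((F ^^ t) -` S) = emeasure bernoulli_mu S"
proof (induction t)
  case 0 then show ?case by simp
next
  case (Suc t)
  have "(F ^^ Suc t) -` S = F -` ((F ^^ t) -` S)" by (simp only: funpow_Suc_right vimage_comp)
  also have "emeasure bernoulli_mu \<dots> = emeasure bernoulli_mu ((F ^^ t) -` S)"
    using assms(1) funpow_pre_sets[OF assms] unfolding measure_preserving_def by auto
  also have "\<dots> = emeasure bernoulli_mu S" by (rule Suc.IH)
  finally show ?case .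
qed

lemma erg_visit:
  fixes F :: "('a::finite) config \<Rightarrow> 'a config"
  assumes erg: "ergodic F" and U: "U \<in> sets bernoulli_mu" and pos: "measure bernoulli_mu U > 0"
  shows "measure bernoulli_mu (UNIV - {c. \<exists>t. (F ^^ t) c \<in> U}) = 0"
proof -
  interpret P: prob_space "bernoulli_mu :: 'a config measure" by (rule prob_bm)
  have mp: "measure_preserving F" using erg by (simp add: ergodic_def)
  define W where "W = (\<Union>t. (F ^^ t) -` U)"
  have W_eq: "{c. \<exists>t. (F ^^ t) c \<in> U} = W" by (auto simp: W_def)
  have Wm: "W \<in> sets bernoulli_mu" unfolding W_def
    using funpow_pre_sets[OF mp U] by auto
  have FW: "F -` W \<subseteq> W"
  proof
    fix c assume "c \<in> F -` W"
    then obtain t where "(F ^^ t) (F c) \<in> U" by (auto simp: W_def)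
    then have "(F ^^ Suc t) c \<in> U" by (simp only: funpow_Suc_right o_apply)
    then show "c \<in> W" unfolding W_def by blast
  qed
  define A where "A n = (F ^^ n) -` W" for n
  have Am: "range A \<subseteq> sets bernoulli_mu" using funpow_pre_sets[OF mp Wm] by (auto simp: A_def)
  have Asuc: "A (Suc n) \<subseteq> A n" for n
  proof -
    have "A (Suc n) = (F ^^ n) -` (F -` W)" by (auto simp: A_def)
    also have "\<dots> \<subseteq> A n" using FW by (auto simp: A_def)
    finally show ?thesis .
  qed
  have dec: "decseq A" using Asuc by (rule decseq_SucI)
  have meas_A: "measure bernoulli_mu (A n) = measure bernoulli_mu W" for n
    using funpow_pre_emeasure[OF mp Wm, of n] by (simp add: A_def P.emeasure_eq_measure)
  define V where "V = (\<Inter>n. A n)"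
  have Vm: "V \<in> sets bernoulli_mu" using Am by (auto simp: V_def)
  have "(\<lambda>n. measure bernoulli_mu (A n)) \<longlonglongrightarrow> measure bernoulli_mu V"
    unfolding V_def by (rule P.finite_Lim_measure_decseq[OF Am dec])
  then have mV: "measure bernoulli_mu V = measure bernoulli_mu W"
    using meas_A by (simp add: LIMSEQ_const_iff)
  have inv: "F -` V = V"
  proof
    show "V \<subseteq> F -` V"
    proof
      fix c assume "c \<in> V"
      then have "\<forall>n. c \<in> A (Suc n)" by (auto simp: V_def)
      then have "\<forall>n. F c \<in> A n" by (simp only: A_def funpow_Suc_right o_apply vimage_eq simp_thms)
      then show "c \<in> F -` V" by (auto simp: V_def)
    qed
  next
    show "F -` V \<subseteq> V"
    proof
      fix c assume "c \<in> F -` V"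
      then have "\<forall>n. F c \<in> A n" by (auto simp: V_def)
      then have "\<forall>n. c \<in> A (Suc n)" by (simp only: A_def funpow_Suc_right o_apply vimage_eq simp_thms)
      then show "c \<in> V" using Asuc by (auto simp: V_def)
    qed
  qed
  have "U \<subseteq> W" unfolding W_def by (auto intro!: exI[of _ "0::nat"])
  then have "measure bernoulli_mu U \<le> measure bernoulli_mu W"
    using Wm by (intro P.finite_measure_mono) auto
  then have "measure bernoulli_mu V \<noteq> 0" using pos mV by simp
  then have "measure bernoulli_mu V = 1" using erg Vm inv by (auto simp: ergodic_def)
  then have "measure bernoulli_mu W = 1" using mV by simp
  then show ?thesis using W_eq Wm P.prob_compl[OF Wm] by simp
qed


definition wd :: "nat \<Rightarrow> 'a config \<Rightarrow> 'a list" where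
  "wd N k = map (\<lambda>j. k (int j - int N)) [0..<2*N+1]"

lemma wd_nth: "j < 2*N+1 \<Longrightarrow> wd N k ! j = k (int j - int N)"
  by (simp add: wd_def del: upt_Suc)

lemma cyl_wd: "c \<in> cyl (wd N k) (- int N) \<longleftrightarrow> (\<forall>i. \<bar>i\<bar> \<le> int N \<longrightarrow> c i = k i)"
proof
  assume h: "c \<in> cyl (wd N k) (- int N)"
  show "\<forall>i. \<bar>i\<bar> \<le> int N \<longrightarrow> c i = k i"
  proof (intro allI impI)
    fix i :: int assume i: "\<bar>i\<bar> \<le> int N"
    define j where "j = nat (i + int N)"
    have j: "j < 2*N+1" "int j = i + int N" using i by (auto simp: j_def)
    then have "c (- int N + int j) = wd N k ! j" using h by (auto simp: cyl_def wd_def)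
    then show "c i = k i" using j by (simp add: wd_nth)
  qed
next
  assume h: "\<forall>i. \<bar>i\<bar> \<le> int N \<longrightarrow> c i = k i"
  show "c \<in> cyl (wd N k) (- int N)"
    unfolding cyl_def wd_def
  proof (intro CollectI allI impI)
    fix j assume "j < length (map (\<lambda>j. k (int j - int N)) [0..<2 * N + 1])"
    then have j: "j < 2*N+1" by simp
    then have "\<bar>- int N + int j\<bar> \<le> int N" by linarith
    then have "c (- int N + int j) = k (- int N + int j)" using h by blast
    then show "c (- int N + int j) = map (\<lambda>j. k (int j - int N)) [0..<2 * N + 1] ! j"
      using j by (simp del: upt_Suc)
  qed
qed

theorem lemma8:
  fixes F :: "('a::finite) config \<Rightarrow> 'a config" and \<epsilon> :: real
  assumes "CARD('a) \<ge> 2"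
    and "cellular_automaton F"
    and "ergodic F"
    and "\<epsilon> > 0"
  shows "\<exists>\<U> :: 'a config set set. finite \<U> \<and> (\<forall>U\<in>\<U>. is_cylinder U) \<and>
           measure bernoulli_mu (\<Union>\<U>) < \<epsilon> \<and>
           {c. \<exists>t::nat. (F ^^ t) c \<in> \<Union>\<U>} = UNIV"
proof -
  interpret P: prob_space "bernoulli_mu :: 'a config measure" by (rule prob_bm)
  have mp: "measure_preserving F" using assms(3) by (simp add: ergodic_def)
  define q where "q = 1 / real CARD('a)"
  have q: "0 < q" "q < 1" using assms(1) by (auto simp: q_def)
  obtain n0 where n0: "q ^ n0 < \<epsilon> / 2" using real_arch_pow_inv[of "\<epsilon>/2" q] q assms(4) by auto
  define n where "n = Suc n0"
  have "q ^ n \<le> q ^ n0" unfolding n_def using q by (simp add: mult_left_le_one_le)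
  define a :: 'a where "a = undefined"
  define U where "U = cyl (replicate n a) 0"
  have Um: "U \<in> sets bernoulli_mu" unfolding U_def by (rule cyl_sets)
  have mU: "measure bernoulli_mu U = q ^ n" unfolding U_def q_def by (rule cyl_rep_measure)
  have mU1: "measure bernoulli_mu U < \<epsilon> / 2" using mU \<open>q ^ n \<le> q ^ n0\<close> n0 by simp
  have mU0: "measure bernoulli_mu U > 0" using mU q by simp
  define K where "K = UNIV - {c. \<exists>t. (F ^^ t) c \<in> U}"
  have mK: "measure bernoulli_mu K = 0" unfolding K_def by (rule erg_visit[OF assms(3) Um mU0])
  have Km: "K \<in> sets bernoulli_mu"
  proof -
    have "{c. \<exists>t. (F ^^ t) c \<in> U} = (\<Union>t. (F ^^ t) -` U)" by auto
    then have "{c. \<exists>t. (F ^^ t) c \<in> U} \<in> sets bernoulli_mu" using funpow_pre_sets[OF mp Um] by auto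
    from sets.Diff[OF sets.top this] show ?thesis unfolding K_def by simp
  qed
  define C where "C N = (\<Union>w\<in>wd N ` K. cyl w (- int N))" for N
  have C_iff: "c \<in> C N \<longleftrightarrow> (\<exists>k\<in>K. \<forall>i. \<bar>i\<bar> \<le> int N \<longrightarrow> c i = k i)" for c N
    unfolding C_def using cyl_wd by blast
  have fin: "finite (wd N ` K)" for N
  proof (rule finite_subset)
    show "wd N ` K \<subseteq> {w. length w = 2*N+1}" by (auto simp: wd_def)
    show "finite {w :: 'a list. length w = 2*N+1}" using finite_lists_length_eq[of "UNIV :: 'a set"] by simp
  qed
  have Cm: "range C \<subseteq> sets bernoulli_mu"
  proof -
    have "C N \<in> sets bernoulli_mu" for N
      unfolding C_def by (rule sets.finite_UN[OF fin]) (rule cyl_sets)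
    then show ?thesis by auto
  qed
  have dec: "decseq C"
  proof (rule decseq_SucI)
    fix N show "C (Suc N) \<subseteq> C N"
    proof
      fix c assume "c \<in> C (Suc N)"
      then obtain k where "k \<in> K" "\<forall>i. \<bar>i\<bar> \<le> int (Suc N) \<longrightarrow> c i = k i" using C_iff by blast
      then have "k \<in> K \<and> (\<forall>i. \<bar>i\<bar> \<le> int N \<longrightarrow> c i = k i)" by auto
      then show "c \<in> C N" using C_iff by blast
    qed
  qed
  have IC: "(\<Inter>N. C N) \<subseteq> K"
  proof
    fix c assume c: "c \<in> (\<Inter>N. C N)"
    show "c \<in> K" unfolding K_def
    proof (clarsimp)
      fix t assume ct: "(F ^^ t) c \<in> U"
      obtain R where R: "\<And>c d. (\<forall>i. \<bar>i\<bar> \<le> int R \<longrightarrow> c i = d i) \<Longrightarrow> (\<forall>i. \<bar>i\<bar> \<le> int n \<longrightarrow> (F ^^ t) c i = (F ^^ t) d i)"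
        using loc_funpow[OF assms(2), of t] unfolding loc_def by blast
      from c have "c \<in> C R" by auto
      then obtain k where k: "k \<in> K" "\<forall>i. \<bar>i\<bar> \<le> int R \<longrightarrow> c i = k i" using C_iff by blast
      have ag: "\<forall>i. \<bar>i\<bar> \<le> int n \<longrightarrow> (F ^^ t) c i = (F ^^ t) k i" using R[OF k(2)] .
      have "(F ^^ t) k \<in> U"
        unfolding U_def cyl_def
      proof (intro CollectI allI impI)
        fix j assume j: "j < length (replicate n a)"
        then have "\<bar>0 + int j\<bar> \<le> int n" by simp
        then have "(F ^^ t) k (0 + int j) = (F ^^ t) c (0 + int j)" using ag by simp
        also have "\<dots> = replicate n a ! j" using ct j unfolding U_def cyl_def by blast
        finally show "(F ^^ t) k (0 + int j) = replicate n a ! j" .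
      qed
      then show False using k(1) unfolding K_def by blast
    qed
  qed
  have "(\<lambda>N. measure bernoulli_mu (C N)) \<longlonglongrightarrow> measure bernoulli_mu (\<Inter>N. C N)"
    by (rule P.finite_Lim_measure_decseq[OF Cm dec])
  moreover have "measure bernoulli_mu (\<Inter>N. C N) = 0"
  proof -
    have "measure bernoulli_mu (\<Inter>N. C N) \<le> measure bernoulli_mu K"
      using IC Km by (intro P.finite_measure_mono) auto
    then show ?thesis using mK by (simp add: measure_nonneg antisym)
  qed
  ultimately have "(\<lambda>N. measure bernoulli_mu (C N)) \<longlonglongrightarrow> 0" by simp
  then obtain N where N: "measure bernoulli_mu (C N) < \<epsilon> / 2"
  proof -
    have "eventually (\<lambda>N. measure bernoulli_mu (C N) < \<epsilon> / 2) sequentially"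
      using \<open>(\<lambda>N. measure bernoulli_mu (C N)) \<longlonglongrightarrow> 0\<close> assms(4) by (intro order_tendstoD(2)) auto
    then show ?thesis using that by (auto simp: eventually_sequentially)
  qed
  define \<U> where "\<U> = insert U ((\<lambda>w. cyl w (- int N)) ` (wd N ` K))"
  have UU: "\<Union>\<U> = U \<union> C N" by (auto simp: \<U>_def C_def)
  show ?thesis
  proof (intro exI[of _ \<U>] conjI)
    show "finite \<U>" unfolding \<U>_def using fin by simp
    show "\<forall>V\<in>\<U>. is_cylinder V"
      unfolding \<U>_def is_cylinder_def U_def n_def by (auto simp: wd_def)
    have "measure bernoulli_mu (U \<union> C N) \<le> measure bernoulli_mu U + measure bernoulli_mu (C N)"
      using Um Cm by (intro measure_Un_le) auto
    then show "measure bernoulli_mu (\<Union>\<U>) < \<epsilon>" using UU mU1 N by simp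
    show "{c. \<exists>t::nat. (F ^^ t) c \<in> \<Union>\<U>} = UNIV"
    proof (intro set_eqI iffI)
      fix c :: "'a config"
      show "c \<in> {c. \<exists>t. (F ^^ t) c \<in> \<Union>\<U>}"
      proof (cases "c \<in> K")
        case True
        then have "c \<in> C N" using C_iff by blast
        then have "(F ^^ 0) c \<in> \<Union>\<U>" using UU by simp
        then show ?thesis by blast
      next
        case False
        then obtain t where "(F ^^ t) c \<in> U" unfolding K_def by blast
        then show ?thesis using UU by blast
      qed
    qed simp
  qed
qed

end
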